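(* Let $n\ge3$ and let $(X_1,\dots,X_n)$ be a stationary Markov chain on $\{0,1\}$ with transition probabilities $\Pr(X_{i+1}=1\mid X_i=0)=\frac{1}{n+1}$, $\Pr(X_{i+1}=1\mid X_i=1)=\frac{2}{n+1}$, and with each $X_i\sim\mathrm{Bernoulli}(1/n)$ (the stationary distribution). Let $S_n=\sum_{i=1}^nX_i$. Then $$D(P_{S_n}\,\|\,\mathrm{Po}(1))\le3\frac{\log n}{n}+\frac1n.$$
   Context: $\mathrm{Po}(1)$ is the Poisson distribution with mean 1; $D(P\|Q)=\sum_xP(x)\log\frac{P(x)}{Q(x)}$ is relative entropy with natural logarithm. *)

theory Defs
  imports "HOL-Probability.Probability"
begin

text \<open>Two-state stationary Markov chain on {0,1} of length n, indexed 0..n-1.\<close>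

definition init_prob :: "nat \<Rightarrow> nat \<Rightarrow> real" where
  "init_prob n a = (if a = 1 then 1 / real n else 1 - 1 / real n)"

definition trans_prob :: "nat \<Rightarrow> nat \<Rightarrow> nat \<Rightarrow> real" where
  "trans_prob n a b =
     (if a = 0 then (if b = 1 then 1 / (real n + 1) else 1 - 1 / (real n + 1))
      else (if b = 1 then 2 / (real n + 1) else 1 - 2 / (real n + 1)))"

definition chain_prob :: "nat \<Rightarrow> (nat \<Rightarrow> nat) \<Rightarrow> real" where
  "chain_prob n x = init_prob n (x 0) * (\<Prod>i<n - 1. trans_prob n (x i) (x (Suc i)))"

definition sum_law :: "nat \<Rightarrow> nat \<Rightarrow> real" where
  "sum_law n k = (\<Sum>x\<in>{x \<in> {..<n} \<rightarrow>\<^sub>E {0::nat, 1}. (\<Sum>i<n. x i) = k}. chain_prob n x)"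

definition rel_entropy :: "(nat \<Rightarrow> real) \<Rightarrow> (nat \<Rightarrow> real) \<Rightarrow> real" where
  "rel_entropy P Q = infsum (\<lambda>k. if P k = 0 then 0 else P k * ln (P k / Q k)) UNIV"

end

theory Submission
  imports Defs
begin

definition paths :: "nat \<Rightarrow> (nat \<Rightarrow> nat) set" where
  "paths m = {..<m} \<rightarrow>\<^sub>E {0::nat, 1}"

definition cp :: "nat \<Rightarrow> nat \<Rightarrow> (nat \<Rightarrow> nat) \<Rightarrow> real" where
  "cp n m x = init_prob n (x 0) * (\<Prod>i<m - 1. trans_prob n (x i) (x (Suc i)))"

lemma finite_paths[simp]: "finite (paths m)"
  unfolding paths_def by (simp add: finite_PiE)

lemma paths_Suc: "paths (Suc m) = (\<lambda>(b, x). x(m := b)) ` ({0,1} \<times> paths m)"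
  unfolding paths_def lessThan_Suc by (simp add: PiE_insert_eq)

lemma inj_paths_Suc: "inj_on (\<lambda>(b, x). x(m := b)) ({0::nat,1} \<times> paths m)"
  unfolding paths_def using inj_combinator[of m "{..<m}" "\<lambda>_. {0::nat,1}"] by simp

lemma sum_paths_Suc:
  "sum F (paths (Suc m)) = (\<Sum>x\<in>paths m. \<Sum>b\<in>{0::nat,1}. F (x(m := b)))"
proof -
  have "sum F (paths (Suc m)) = (\<Sum>p\<in>{0::nat,1} \<times> paths m. F ((\<lambda>(b, x). x(m := b)) p))"
    unfolding paths_Suc by (subst sum.reindex[OF inj_paths_Suc]) (simp add: comp_def case_prod_beta)
  also have "\<dots> = (\<Sum>b\<in>{0::nat,1}. \<Sum>x\<in>paths m. F (x(m := b)))"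
    by (unfold sum.cartesian_product) (simp add: case_prod_unfold)
  also have "\<dots> = (\<Sum>x\<in>paths m. \<Sum>b\<in>{0::nat,1}. F (x(m := b)))"
    by (rule sum.swap)
  finally show ?thesis .
qed

lemma paths_0: "paths 0 = {\<lambda>_. undefined}"
  unfolding paths_def by simp

lemma cp_Suc:
  assumes "m \<ge> 1"
  shows "cp n (Suc m) (x(m := b)) = cp n m x * trans_prob n (x (m - 1)) b"
proof -
  obtain k where k: "m = Suc k" using assms by (cases m) auto
  have "(\<Prod>i<k. trans_prob n ((x(Suc k := b)) i) ((x(Suc k := b)) (Suc i)))
      = (\<Prod>i<k. trans_prob n (x i) (x (Suc i)))"
    by (intro prod.cong) auto
  then show ?thesis unfolding cp_def k by (simp add: mult.assoc)
qed

lemma fin_ineq: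
  fixes N L M K l2 :: real
  assumes N: "N \<ge> 3" and hK: "K \<le> L - 1/N" and hM: "M \<ge> L + 1/(N+1)" and hl: "l2 \<le> L" and hL: "L \<ge> 0"
  shows "(1-1/N) * (K - L) + (1/N) * (-L) + (N-1) * ((1-1/N) * ((1-1/(N+1)) * (L - M) + (1/(N+1)) * (-M))
     + (1/N) * ((1-2/(N+1)) * (K - M) + (2/(N+1)) * (l2 - M))) + 1 + L \<le> 3 * L / N + 1 / N"
proof -
  have p: "N > 0" "N + 1 > 0" using N by auto
  have G: "N*(N+1) * ((1-1/N) * (K - L) + (1/N) * (-L) + (N-1) * ((1-1/N) * ((1-1/(N+1)) * (L - M) + (1/(N+1)) * (-M))
     + (1/N) * ((1-2/(N+1)) * (K - M) + (2/(N+1)) * (l2 - M))) + 1 + L - (3 * L / N + 1 / N))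
    = (N^3-2*N^2-2*N-3)*L + 2*N*(N-1)*K - N*(N^2-1)*M + 2*(N-1)*l2 + (N^2-1)"
    using p apply (simp add: divide_simps)
    apply (simp add: algebra_simps power2_eq_square power3_eq_cube)
    done
  have a1: "2*N*(N-1)*K \<le> 2*N*(N-1)*(L - 1/N)" using hK N by (intro mult_left_mono) auto
  have "1 \<le> N^2" using N by (intro one_le_power) auto
  then have q: "0 \<le> N*(N^2-1)" using N by (intro mult_nonneg_nonneg) auto
  have a2: "N*(N^2-1)*M \<ge> N*(N^2-1)*(L + 1/(N+1))" using hM q by (intro mult_left_mono) auto
  have a3: "2*(N-1)*l2 \<le> 2*(N-1)*L" using hl N by (intro mult_left_mono) auto
  have e1: "2*N*(N-1)*(L - 1/N) = 2*N*(N-1)*L - 2*(N-1)" using p by (simp add: field_simps)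
  have e2: "N*(N^2-1)*(L + 1/(N+1)) = N*(N^2-1)*L + N*(N-1)" using p
  proof -
    have "N^2 - 1 = (N-1)*(N+1)" by (simp add: algebra_simps power2_eq_square)
    then have "N*(N^2-1)*(1/(N+1)) = N*(N-1)" using p by simp
    then show ?thesis by (simp add: distrib_left)
  qed
  have "(N^3-2*N^2-2*N-3)*L + 2*N*(N-1)*K - N*(N^2-1)*M + 2*(N-1)*l2 + (N^2-1)
     \<le> (N^3-2*N^2-2*N-3)*L + (2*N*(N-1)*L - 2*(N-1)) - (N*(N^2-1)*L + N*(N-1)) + 2*(N-1)*L + (N^2-1)"
    using a1 a2 a3 e1 e2 by linarith
  also have "\<dots> = -(N+5)*L - (N-1)" by (simp add: algebra_simps power2_eq_square power3_eq_cube)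
  also have "\<dots> \<le> 0" proof -
    have "(N+5)*L \<ge> 0" using hL N by simp
    moreover have "-(N+5)*L = -((N+5)*L)" by (simp add: algebra_simps)
    ultimately show ?thesis using N by linarith
  qed
  finally have "N*(N+1) * ((1-1/N) * (K - L) + (1/N) * (-L) + (N-1) * ((1-1/N) * ((1-1/(N+1)) * (L - M) + (1/(N+1)) * (-M))
     + (1/N) * ((1-2/(N+1)) * (K - M) + (2/(N+1)) * (l2 - M))) + 1 + L - (3 * L / N + 1 / N)) \<le> 0"
    using G by linarith
  then show ?thesis using p by (simp add: mult_le_0_iff)
qed

definition Aset :: "nat \<Rightarrow> nat \<Rightarrow> (nat \<Rightarrow> nat) set" where
  "Aset n k = {x \<in> paths n. (\<Sum>i<n. x i) = k}"

lemma sum_law_eq: "sum_law n k = (\<Sum>x\<in>Aset n k. cp n n x)"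
  unfolding sum_law_def Aset_def paths_def chain_prob_def cp_def by simp

lemma finite_Aset[simp]: "finite (Aset n k)"
  unfolding Aset_def by simp

lemma paths_01: "x \<in> paths n \<Longrightarrow> i < n \<Longrightarrow> x i = 0 \<or> x i = 1"
  unfolding paths_def by (auto simp: PiE_iff)

lemma S_le: "x \<in> paths n \<Longrightarrow> (\<Sum>i<n. x i) \<le> n"
proof -
  assume x: "x \<in> paths n"
  have "(\<Sum>i<n. x i) \<le> (\<Sum>i<n. (1::nat))"
    using paths_01[OF x] by (intro sum_mono) (metis lessThan_iff order_refl zero_le_one)
  then show ?thesis by simp
qed

lemma card_ones: "x \<in> paths n \<Longrightarrow> card {i \<in> {..<n}. x i = 1} = (\<Sum>i<n. x i)"
proof -
  assume x: "x \<in> paths n"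
  have "card {i \<in> {..<n}. x i = 1} = (\<Sum>i\<in>{i \<in> {..<n}. x i = 1}. (1::nat))" by simp
  also have "\<dots> = (\<Sum>i<n. if x i = 1 then 1 else 0)" by (subst sum.inter_filter) auto
  also have "\<dots> = (\<Sum>i<n. x i)" using paths_01[OF x] by (intro sum.cong) auto
  finally show ?thesis .
qed

lemma card_Aset: "card (Aset n k) \<le> n choose k"
proof -
  let ?f = "\<lambda>x. {i \<in> {..<n}. x i = (1::nat)}"
  have "card (Aset n k) \<le> card {B. B \<subseteq> {..<n} \<and> card B = k}"
  proof (rule card_inj_on_le)
    show "inj_on ?f (Aset n k)"
    proof (rule inj_onI)
      fix x y assume x: "x \<in> Aset n k" and y: "y \<in> Aset n k" and e: "?f x = ?f y"
      have xp: "x \<in> paths n" and yp: "y \<in> paths n" using x y unfolding Aset_def by auto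
      show "x = y"
      proof (rule PiE_ext)
        show "x \<in> {..<n} \<rightarrow>\<^sub>E {0::nat,1}" "y \<in> {..<n} \<rightarrow>\<^sub>E {0::nat,1}" using xp yp unfolding paths_def by auto
        fix i assume i: "i \<in> {..<n}"
        have "x i = 1 \<longleftrightarrow> y i = 1" using e i by blast
        then show "x i = y i" using paths_01[OF xp, of i] paths_01[OF yp, of i] i by auto
      qed
    qed
    show "?f ` Aset n k \<subseteq> {B. B \<subseteq> {..<n} \<and> card B = k}"
      using card_ones unfolding Aset_def by auto
  qed simp
  also have "\<dots> = n choose k" by (subst n_subsets) auto
  finally show ?thesis .
qed

lemma card_Aset_fact: "real (card (Aset n k)) * fact k \<le> real n ^ k"
proof -
  have "card (Aset n k) * fact k \<le> (n choose k) * fact k" using card_Aset by (intro mult_right_mono) auto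
  also have "\<dots> \<le> n ^ k" by (rule binomial_fact_pow)
  finally have "card (Aset n k) * fact k \<le> n ^ k" .
  then have "real (card (Aset n k) * fact k) \<le> real (n ^ k)" by (rule of_nat_mono)
  then show ?thesis by simp
qed

context
  fixes n :: nat
  assumes n3: "n \<ge> 3"
begin

lemma init_pos: "init_prob n a > 0"
  using n3 unfolding init_prob_def by (auto simp: field_simps)

lemma trans_pos: "trans_prob n a b > 0"
  using n3 unfolding trans_prob_def by (auto simp: field_simps)

lemma cp_pos: "cp n m x > 0"
  unfolding cp_def using init_pos trans_pos by (auto intro!: prod_pos mult_pos_pos)

lemma cp_nz[simp]: "cp n m x \<noteq> 0"
  using cp_pos by (metis less_irrefl)

lemma trans_nz[simp]: "trans_prob n a b \<noteq> 0"
  using trans_pos by (metis less_irrefl)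

lemma trans_sum: "(\<Sum>b\<in>{0::nat,1}. trans_prob n a b * h b) = trans_prob n a 0 * h 0 + trans_prob n a 1 * h 1"
  by simp

lemma trans_total: "trans_prob n a 0 + trans_prob n a 1 = 1"
  unfolding trans_prob_def by auto

lemma stat: "init_prob n 0 * trans_prob n 0 b + init_prob n 1 * trans_prob n 1 b = init_prob n b"
  if "b \<in> {0,1}"
proof -
  have a: "real n > 0" "real n + 1 > 0" using n3 by auto
  define N where "N = real n"
  have N: "N > 0" "N + 1 > 0" using a N_def by auto
  have e0: "(1 - 1/N) * (1 - 1/(N+1)) + (1/N) * (1 - 2/(N+1)) = 1 - 1/N"
    using N by (simp add: divide_simps) (simp add: algebra_simps)
  have e1: "(1 - 1/N) * (1/(N+1)) + (1/N) * (2/(N+1)) = 1/N"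
    using N by (simp add: divide_simps)
  show ?thesis using that e0 e1 unfolding init_prob_def trans_prob_def N_def by (auto simp: mult_ac)
qed

lemma marg_Suc:
  "(\<Sum>x\<in>paths (Suc k). cp n (Suc k) x * h (x k)) = (\<Sum>a\<in>{0::nat,1}. init_prob n a * h a)"
proof (induction k arbitrary: h)
  case 0
  show ?case unfolding sum_paths_Suc[of _ 0] paths_0 by (simp add: cp_def)
next
  case (Suc k)
  have "(\<Sum>x\<in>paths (Suc (Suc k)). cp n (Suc (Suc k)) x * h (x (Suc k)))
      = (\<Sum>x\<in>paths (Suc k). \<Sum>b\<in>{0::nat,1}. cp n (Suc k) x * trans_prob n (x k) b * h b)"
    unfolding sum_paths_Suc[of _ "Suc k"] by (simp add: cp_Suc)
  also have "\<dots> = (\<Sum>x\<in>paths (Suc k). cp n (Suc k) x * (\<lambda>a. \<Sum>b\<in>{0::nat,1}. trans_prob n a b * h b) (x k))"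
    by (simp add: algebra_simps)
  also have "\<dots> = (\<Sum>a\<in>{0::nat,1}. init_prob n a * (\<Sum>b\<in>{0::nat,1}. trans_prob n a b * h b))"
    by (rule Suc.IH)
  also have "\<dots> = (\<Sum>b\<in>{0::nat,1}. (init_prob n 0 * trans_prob n 0 b + init_prob n 1 * trans_prob n 1 b) * h b)"
    by (simp add: algebra_simps)
  also have "\<dots> = (\<Sum>b\<in>{0::nat,1}. init_prob n b * h b)"
    using stat by (intro sum.cong) auto
  finally show ?case .
qed

lemma total_Suc: "(\<Sum>x\<in>paths (Suc k). cp n (Suc k) x) = 1"
  using marg_Suc[of k "\<lambda>_. 1"] unfolding init_prob_def by simp

lemma mean_Suc:
  "(\<Sum>x\<in>paths (Suc k). cp n (Suc k) x * (\<Sum>i<Suc k. real (x i))) = real (Suc k) / real n"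
proof (induction k)
  case 0
  show ?case unfolding sum_paths_Suc[of _ 0] paths_0 by (simp add: cp_def init_prob_def)
next
  case (Suc k)
  have "(\<Sum>x\<in>paths (Suc (Suc k)). cp n (Suc (Suc k)) x * (\<Sum>i<Suc (Suc k). real (x i)))
      = (\<Sum>x\<in>paths (Suc k). \<Sum>b\<in>{0::nat,1}. cp n (Suc k) x * trans_prob n (x k) b *
           ((\<Sum>i<Suc k. real (x i)) + real b))"
    unfolding sum_paths_Suc[of _ "Suc k"] by (simp add: cp_Suc)
  also have "\<dots> = (\<Sum>x\<in>paths (Suc k). cp n (Suc k) x * (\<Sum>i<Suc k. real (x i)))
      + (\<Sum>x\<in>paths (Suc k). cp n (Suc k) x * trans_prob n (x k) 1)"
  proof -
    have "\<And>x. (\<Sum>b\<in>{0::nat,1}. cp n (Suc k) x * trans_prob n (x k) b *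
           ((\<Sum>i<Suc k. real (x i)) + real b))
        = cp n (Suc k) x * (\<Sum>i<Suc k. real (x i)) + cp n (Suc k) x * trans_prob n (x k) 1"
    proof -
      fix x
      have t: "trans_prob n (x k) 0 = 1 - trans_prob n (x k) 1" using trans_total[of "x k"] by simp
      show "?thesis x" by (simp add: t algebra_simps)
    qed
    then show ?thesis by (simp add: sum.distrib)
  qed
  also have "(\<Sum>x\<in>paths (Suc k). cp n (Suc k) x * trans_prob n (x k) 1) = init_prob n 1"
    using marg_Suc[of k "\<lambda>a. trans_prob n a 1"] stat[of 1] by simp
  finally show ?case using Suc.IH unfolding init_prob_def by (simp add: add_divide_distrib)
qed

definition ent_c :: real where
  "ent_c = (\<Sum>a\<in>{0::nat,1}. init_prob n a * (\<Sum>b\<in>{0::nat,1}. trans_prob n a b * ln (trans_prob n a b)))"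

lemma ent_Suc:
  "(\<Sum>x\<in>paths (Suc k). cp n (Suc k) x * ln (cp n (Suc k) x))
     = (\<Sum>a\<in>{0::nat,1}. init_prob n a * ln (init_prob n a)) + real k * ent_c"
proof (induction k)
  case 0
  show ?case unfolding sum_paths_Suc[of _ 0] paths_0 by (simp add: cp_def)
next
  case (Suc k)
  have "(\<Sum>x\<in>paths (Suc (Suc k)). cp n (Suc (Suc k)) x * ln (cp n (Suc (Suc k)) x))
      = (\<Sum>x\<in>paths (Suc k). \<Sum>b\<in>{0::nat,1}. cp n (Suc k) x * trans_prob n (x k) b *
           (ln (cp n (Suc k) x) + ln (trans_prob n (x k) b)))"
    unfolding sum_paths_Suc[of _ "Suc k"] by (simp add: cp_Suc ln_mult cp_pos trans_pos)
  also have "\<dots> = (\<Sum>x\<in>paths (Suc k). cp n (Suc k) x * ln (cp n (Suc k) x))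
      + (\<Sum>x\<in>paths (Suc k). cp n (Suc k) x * (\<lambda>a. \<Sum>b\<in>{0::nat,1}. trans_prob n a b * ln (trans_prob n a b)) (x k))"
  proof -
    have "\<And>x. (\<Sum>b\<in>{0::nat,1}. cp n (Suc k) x * trans_prob n (x k) b *
           (ln (cp n (Suc k) x) + ln (trans_prob n (x k) b)))
        = cp n (Suc k) x * ln (cp n (Suc k) x) + cp n (Suc k) x * (\<Sum>b\<in>{0::nat,1}. trans_prob n (x k) b * ln (trans_prob n (x k) b))"
    proof -
      fix x
      have t: "trans_prob n (x k) 0 = 1 - trans_prob n (x k) 1" using trans_total[of "x k"] by simp
      show "?thesis x" by (simp add: t algebra_simps)
    qed
    then show ?thesis by (simp add: sum.distrib)
  qed
  also have "(\<Sum>x\<in>paths (Suc k). cp n (Suc k) x * (\<lambda>a. \<Sum>b\<in>{0::nat,1}. trans_prob n a b * ln (trans_prob n a b)) (x k)) = ent_c"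
    unfolding ent_c_def by (rule marg_Suc)
  finally show ?case using Suc.IH by (simp add: algebra_simps)
qed

lemma term_bound:
  "(if sum_law n k = 0 then 0 else sum_law n k * ln (sum_law n k / pmf (poisson_pmf 1) k))
    \<le> (\<Sum>x\<in>Aset n k. cp n n x * (ln (cp n n x) + 1 + real k * ln (real n)))"
proof (cases "Aset n k = {}")
  case True
  then show ?thesis by (simp add: sum_law_eq)
next
  case False
  define P where "P = sum_law n k"
  define N where "N = real (card (Aset n k))"
  have N1: "N \<ge> 1" using False unfolding N_def
    by (metis One_nat_def Suc_leI card_gt_0_iff finite_Aset of_nat_1 of_nat_le_iff)
  have P0: "P > 0" unfolding P_def sum_law_eq using False by (intro sum_pos) (auto intro: cp_pos)
  have pw: "cp n n x * ln (cp n n x) \<ge> cp n n x * (ln P - ln N) + cp n n x - P / N" for x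
  proof -
    define c where "c = cp n n x"
    have c0: "c > 0" unfolding c_def by (rule cp_pos)
    define y where "y = c * N / P"
    have y0: "y > 0" unfolding y_def using c0 N1 P0 by auto
    have "ln (1 / y) \<le> 1 / y - 1" using y0 by (intro ln_le_minus_one) auto
    moreover have "ln (1 / y) = - (ln c + ln N - ln P)"
      unfolding y_def using c0 N1 P0 by (simp add: ln_div ln_mult)
    moreover have "1 / y = P / (c * N)" unfolding y_def by simp
    ultimately have "ln c \<ge> ln P - ln N + 1 - P / (c * N)" by linarith
    then have "c * ln c \<ge> c * (ln P - ln N + 1 - P / (c * N))" using c0 by (intro mult_left_mono) auto
    also have "c * (ln P - ln N + 1 - P / (c * N)) = c * (ln P - ln N) + c - P / N"
      using c0 N1 by (simp add: field_simps)
    finally show ?thesis unfolding c_def .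
  qed
  have "(\<Sum>x\<in>Aset n k. cp n n x * ln (cp n n x)) \<ge> (\<Sum>x\<in>Aset n k. cp n n x * (ln P - ln N) + cp n n x - P / N)"
    by (intro sum_mono pw)
  also have "(\<Sum>x\<in>Aset n k. cp n n x * (ln P - ln N) + cp n n x - P / N) = P * (ln P - ln N) + P - N * (P / N)"
    unfolding P_def sum_law_eq N_def by (simp add: sum.distrib sum_subtractf sum_distrib_right)
  also have "P * (ln P - ln N) + P - N * (P / N) = P * (ln P - ln N)" using N1 by simp
  finally have ent: "(\<Sum>x\<in>Aset n k. cp n n x * ln (cp n n x)) \<ge> P * (ln P - ln N)" .
  have rhs: "(\<Sum>x\<in>Aset n k. cp n n x * (ln (cp n n x) + 1 + real k * ln (real n)))
     = (\<Sum>x\<in>Aset n k. cp n n x * ln (cp n n x)) + P * (1 + real k * ln (real n))"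
    unfolding P_def sum_law_eq by (simp add: algebra_simps sum.distrib sum_distrib_left sum_distrib_right)
  have fpos: "(fact k :: real) > 0" by simp
  have npos: "real n > 0" using n3 by simp
  have lhs: "P * ln (P / pmf (poisson_pmf 1) k) = P * (ln P + 1 + ln (fact k))"
    using P0 fpos by (simp add: pmf_poisson ln_div ln_mult)
  have "ln (N * fact k) \<le> ln (real n ^ k)"
    using card_Aset_fact[of n k] N1 fpos npos unfolding N_def by (subst ln_le_cancel_iff) auto
  then have lf: "ln N + ln (fact k) \<le> real k * ln (real n)"
    using N1 fpos by (simp add: ln_mult ln_realpow)
  have "P * (ln P + 1 + ln (fact k)) \<le> P * (ln P - ln N + 1 + real k * ln (real n))"
    using lf P0 by (intro mult_left_mono) auto
  then show ?thesis using lhs rhs ent P0 unfolding P_def[symmetric]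
    by (simp add: algebra_simps)
qed

lemma total_bound:
  "(\<Sum>x\<in>paths n. cp n n x * (ln (cp n n x) + 1 + real (\<Sum>i<n. x i) * ln (real n)))
     \<le> 3 * ln (real n) / real n + 1 / real n"
proof -
  define k where "k = n - 1"
  have nk: "n = Suc k" using n3 unfolding k_def by simp
  define N where "N = real n"
  define L where "L = ln N"
  define M where "M = ln (N + 1)"
  define K where "K = ln (N - 1)"
  define l2 where "l2 = ln (2::real)"
  have N3: "N \<ge> 3" using n3 unfolding N_def by simp
  have "(\<Sum>x\<in>paths n. cp n n x * (ln (cp n n x) + 1 + real (\<Sum>i<n. x i) * ln (real n)))
     = (\<Sum>x\<in>paths n. cp n n x * ln (cp n n x)) + (\<Sum>x\<in>paths n. cp n n x)
       + ln (real n) * (\<Sum>x\<in>paths n. cp n n x * (\<Sum>i<n. real (x i)))"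
    by (simp add: algebra_simps sum.distrib sum_distrib_left sum_distrib_right)
  also have "\<dots> = (\<Sum>a\<in>{0::nat,1}. init_prob n a * ln (init_prob n a)) + real k * ent_c + 1 + ln (real n)"
    using ent_Suc[of k] total_Suc[of k] mean_Suc[of k] n3 unfolding nk[symmetric] by simp
  also have "\<dots> = (1-1/N) * (K - L) + (1/N) * (-L) + (N-1) * ((1-1/N) * ((1-1/(N+1)) * (L - M) + (1/(N+1)) * (-M))
     + (1/N) * ((1-2/(N+1)) * (K - M) + (2/(N+1)) * (l2 - M))) + 1 + L"
  proof -
    have p: "N > 0" "N + 1 > 0" "N - 1 > 0" using N3 by auto
    have e1: "ln (1 - 1/N) = K - L" unfolding K_def L_def
    proof -
      have "1 - 1/N = (N - 1)/N" using p by (simp add: field_simps)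
      then show "ln (1 - 1/N) = ln (N - 1) - ln N" using p by (simp add: ln_div)
    qed
    have e2: "ln (1/N) = - L" unfolding L_def using p by (simp add: ln_div)
    have e3: "ln (1 - 1/(N+1)) = L - M" unfolding L_def M_def
    proof -
      have "1 - 1/(N+1) = N/(N+1)" using p by (simp add: field_simps)
      then show "ln (1 - 1/(N+1)) = ln N - ln (N + 1)" using p by (simp add: ln_div)
    qed
    have e4: "ln (1/(N+1)) = - M" unfolding M_def using p by (simp add: ln_div)
    have e5: "ln (1 - 2/(N+1)) = K - M" unfolding K_def M_def
    proof -
      have "1 - 2/(N+1) = (N - 1)/(N+1)" using p by (simp add: field_simps)
      then show "ln (1 - 2/(N+1)) = ln (N - 1) - ln (N + 1)" using p by (simp add: ln_div)
    qed
    have e6: "ln (2/(N+1)) = l2 - M" unfolding l2_def M_def using p by (simp add: ln_div)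
    have kk: "real k = N - 1" unfolding N_def nk by simp
    show ?thesis unfolding ent_c_def kk
      unfolding init_prob_def trans_prob_def N_def[symmetric] L_def[symmetric]
      using e1 e2 e3 e4 e5 e6 by simp
  qed
  also have "\<dots> \<le> 3 * L / N + 1 / N"
  proof (rule fin_ineq[OF N3])
    have p: "N > 0" "N + 1 > 0" "N - 1 > 0" using N3 by auto
    have "ln (1 - 1/N) \<le> - (1/N)" using p N3 by (intro ln_one_minus_pos_upper_bound) auto
    moreover have "ln (1 - 1/N) = K - L" unfolding K_def L_def
    proof -
      have "1 - 1/N = (N - 1)/N" using p by (simp add: field_simps)
      then show "ln (1 - 1/N) = ln (N - 1) - ln N" using p by (simp add: ln_div)
    qed
    ultimately show "K \<le> L - 1/N" by simp
    have "ln (1 - 1/(N+1)) \<le> - (1/(N+1))" using p by (intro ln_one_minus_pos_upper_bound) auto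
    moreover have "ln (1 - 1/(N+1)) = L - M" unfolding L_def M_def
    proof -
      have "1 - 1/(N+1) = N/(N+1)" using p by (simp add: field_simps)
      then show "ln (1 - 1/(N+1)) = ln N - ln (N + 1)" using p by (simp add: ln_div)
    qed
    ultimately show "M \<ge> L + 1/(N+1)" by simp
    show "l2 \<le> L" unfolding l2_def L_def using N3 by simp
    show "L \<ge> 0" unfolding L_def using N3 by simp
  qed
  finally show ?thesis unfolding N_def L_def .
qed

end

theorem mainTheorem13:
  fixes n :: nat
  assumes "n \<ge> 3"
  shows "rel_entropy (sum_law n) (pmf (poisson_pmf 1))
           \<le> 3 * ln (real n) / real n + 1 / real n"
proof -
  define f where "f k = (if sum_law n k = 0 then 0 else sum_law n k * ln (sum_law n k / pmf (poisson_pmf 1) k))" for k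
  define g where "g x = cp n n x * (ln (cp n n x) + 1 + real (\<Sum>i<n. x i) * ln (real n))" for x
  have empty: "Aset n k = {}" if "k \<notin> {..n}" for k
    using that S_le[of _ n] unfolding Aset_def by fastforce
  have "rel_entropy (sum_law n) (pmf (poisson_pmf 1)) = infsum f UNIV"
    unfolding rel_entropy_def f_def by simp
  also have "\<dots> = infsum f {..n}"
    by (rule infsum_cong_neutral) (auto simp: f_def sum_law_eq empty)
  also have "\<dots> = sum f {..n}" by simp
  also have "\<dots> \<le> (\<Sum>k\<in>{..n}. \<Sum>x\<in>Aset n k. g x)"
  proof (rule sum_mono)
    fix k assume "k \<in> {..n}"
    have "f k \<le> (\<Sum>x\<in>Aset n k. cp n n x * (ln (cp n n x) + 1 + real k * ln (real n)))"
      unfolding f_def by (rule term_bound[OF assms])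
    also have "\<dots> = (\<Sum>x\<in>Aset n k. g x)"
      unfolding g_def Aset_def by (intro sum.cong) auto
    finally show "f k \<le> (\<Sum>x\<in>Aset n k. g x)" .
  qed
  also have "\<dots> = (\<Sum>x\<in>paths n. g x)"
    unfolding Aset_def using S_le[of _ n] by (intro sum.group) auto
  also have "\<dots> \<le> 3 * ln (real n) / real n + 1 / real n"
    unfolding g_def by (rule total_bound[OF assms])
  finally show ?thesis .
qed

end
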